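(* Let $(G,k)$ be an instance of Clique and let $(\mathcal{G},k',\ell)$ be the instance of Multistage Vertex Cover produced from $(G,k)$ by the construction described in the context. If $(\mathcal{G},k',\ell)$ is a yes-instance of Multistage Vertex Cover, then $G$ contains a clique of size $k$.
   Context: Multistage Vertex Cover: given a temporal graph $\mathcal{G}$, i.e. a sequence of layers (static graphs) $(G_1,\dots,G_\tau)$ on a common vertex set $V'$, and integers $k'\in\mathbb{N}$, $\ell\in\mathbb{N}_0$, decide whether there is $(S_1,\dots,S_\tau)$ with each $S_i\subseteq V'$ a vertex cover of $G_i$ of size at most $k'$ and $|S_i\triangle S_{i+1}|\le\ell$ for all $i<\tau$ ($\triangle$ = symmetric difference). Construction: let $G=(V,E)$ with $E=\{e_1,\dots,e_m\}$, $m=|E|$, and positive integer $k$. Let $K=\binom{k}{2}$, $k'=2K+k+1$, $\kappa=K+k+3$, $\tau=2m\kappa+1$, and $\ell=2$. The vertex set $V'$ contains $V\cup E$ (each edge of $G$ is also a vertex), the sets $U^t=\{u^t_1,\dots,u^t_K\}$ for $t\in\{1,\dots,\kappa+1\}$, the set $C=\{c_1,\dots,c_{\tau}\}$, and additional new leaf vertices introduced below. The layers $G_1,\dots,G_\tau$ have the following edges: (1) for every odd $i\in\{1,\dots,\tau\}$, in $G_i$ the vertex $c_i$ is the center of a star with $k'+1$ new leaf vertices; (2) for every $j\in\{0,\dots,\kappa\}$, in $G_{2mj+1}$ each vertex of $U^{j+1}$ is the center of a star with $k'+1$ new leaf vertices; (3) for every $j\in\{0,\dots,\kappa-1\}$ and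 $i\in\{1,\dots,2m+1\}$, in $G_{2mj+i}$ the vertex $u^{j+1}_x$ is adjacent to $u^{j+2}_x$ for every $x\in\{1,\dots,K\}$; (4) for every even $i\in\{1,\dots,\tau-1\}$, the edge $\{c_i,c_{i+1}\}$ is present in $G_i$ and in $G_{i+1}$; (5) for every $j\in\{0,\dots,\kappa-1\}$ and $i\in\{1,\dots,m\}$ with $e_i=\{v,w\}$, in $G_{2mj+2i}$ the vertex $c_{2mj+2i}$ is adjacent to the vertices $e_i$, $v$ and $w$. No other edges are present. The output is $(\mathcal{G}=(G_1,\dots,G_\tau),k',\ell)$. *)

theory Defs
  imports Main
begin

text \<open>Static graphs are given by a vertex set and a set of edges, each edge a 2-element set.
  A temporal graph is a sequence of layers, indexed 1..tau, given by a function nat => edge set.\<close>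

definition is_vertex_cover :: "'v set set \<Rightarrow> 'v set \<Rightarrow> bool" where
  "is_vertex_cover Ed S \<longleftrightarrow> (\<forall>e\<in>Ed. e \<inter> S \<noteq> {})"

definition symdiff :: "'v set \<Rightarrow> 'v set \<Rightarrow> 'v set" where
  "symdiff A B = (A - B) \<union> (B - A)"

definition multistage_vc_yes ::
  "'v set \<Rightarrow> (nat \<Rightarrow> 'v set set) \<Rightarrow> nat \<Rightarrow> nat \<Rightarrow> nat \<Rightarrow> bool" where
  "multistage_vc_yes Vs L tau k' l \<longleftrightarrow>
     (\<exists>S :: nat \<Rightarrow> 'v set.
        (\<forall>i\<in>{1..tau}. S i \<subseteq> Vs \<and> is_vertex_cover (L i) (S i) \<and> card (S i) \<le> k') \<and>
        (\<forall>i. 1 \<le> i \<and> i < tau \<longrightarrow> card (symdiff (S i) (S (Suc i))) \<le> l))"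

definition has_clique :: "'a set \<Rightarrow> 'a set set \<Rightarrow> nat \<Rightarrow> bool" where
  "has_clique V E k \<longleftrightarrow>
     (\<exists>Q\<subseteq>V. card Q = k \<and> (\<forall>u\<in>Q. \<forall>w\<in>Q. u \<noteq> w \<longrightarrow> {u, w} \<in> E))"

text \<open>Orig v: vertex v of G;  EdgeV e: the edge e of G as a vertex;  U t x: u^t_x;  C i: c_i;
  LeafC i y: the y-th leaf of the star at c_i in layer i (rule 1);
  LeafU t x y: the y-th leaf of the star at u^t_x in layer 2m(t-1)+1 (rule 2).\<close>
datatype 'a vtx = Orig 'a | EdgeV "'a set" | U nat nat | C nat
  | LeafC nat nat | LeafU nat nat nat

definition red_K :: "nat \<Rightarrow> nat" where "red_K k = k choose 2"
definition red_k' :: "nat \<Rightarrow> nat" where "red_k' k = 2 * red_K k + k + 1"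
definition red_kappa :: "nat \<Rightarrow> nat" where "red_kappa k = red_K k + k + 3"
definition red_tau :: "'a set list \<Rightarrow> nat \<Rightarrow> nat" where
  "red_tau es k = 2 * length es * red_kappa k + 1"
definition red_l :: nat where "red_l = 2"

text \<open>The edge e_i (1 <= i <= m) is es ! (i - 1).\<close>
definition red_vertices :: "'a set \<Rightarrow> 'a set list \<Rightarrow> nat \<Rightarrow> 'a vtx set" where
  "red_vertices V es k =
     Orig ` V \<union> EdgeV ` set es
     \<union> {U t x | t x. t \<in> {1..red_kappa k + 1} \<and> x \<in> {1..red_K k}}
     \<union> C ` {1..red_tau es k}
     \<union> {LeafC i y | i y. i \<in> {1..red_tau es k} \<and> odd i \<and> y \<in> {1..red_k' k + 1}}
     \<union> {LeafU t x y | t x y. t \<in> {1..red_kappa k + 1} \<and> x \<in> {1..red_K k}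
                          \<and> y \<in> {1..red_k' k + 1}}"

definition red_layer :: "'a set list \<Rightarrow> nat \<Rightarrow> nat \<Rightarrow> 'a vtx set set" where
  "red_layer es k i =
     (let m = length es; K = red_K k; k' = red_k' k; \<kappa> = red_kappa k; \<tau> = red_tau es k in
     {e. \<comment> \<open>(1)\<close>
         (odd i \<and> 1 \<le> i \<and> i \<le> \<tau> \<and> (\<exists>y\<in>{1..k'+1}. e = {C i, LeafC i y}))
       \<comment> \<open>(2)\<close>
       \<or> (\<exists>j\<le>\<kappa>. i = 2*m*j + 1 \<and>
            (\<exists>x\<in>{1..K}. \<exists>y\<in>{1..k'+1}. e = {U (j+1) x, LeafU (j+1) x y}))
       \<comment> \<open>(3)\<close>
       \<or> (\<exists>j<\<kappa>. \<exists>i'\<in>{1..2*m+1}. i = 2*m*j + i' \<and>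
            (\<exists>x\<in>{1..K}. e = {U (j+1) x, U (j+2) x}))
       \<comment> \<open>(4)\<close>
       \<or> (\<exists>i0. even i0 \<and> 1 \<le> i0 \<and> i0 \<le> \<tau> - 1 \<and> (i = i0 \<or> i = i0 + 1)
            \<and> e = {C i0, C (i0 + 1)})
       \<comment> \<open>(5)\<close>
       \<or> (\<exists>j<\<kappa>. \<exists>i'\<in>{1..m}. i = 2*m*j + 2*i' \<and>
            (\<exists>v w. es ! (i' - 1) = {v, w} \<and>
               (e = {C i, EdgeV (es ! (i' - 1))} \<or> e = {C i, Orig v} \<or> e = {C i, Orig w})))})"

end

theory Submission
  imports Defs
begin


lemma symdiff_mem: "v \<in> symdiff A B \<longleftrightarrow> (v \<in> A) \<noteq> (v \<in> B)"
  by (auto simp: symdiff_def)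

lemma cross_exists:
  "a \<le> b \<Longrightarrow> (v \<in> S a) \<noteq> (v \<in> S b) \<Longrightarrow> \<exists>s\<in>{a..<b}. (v \<in> S s) \<noteq> (v \<in> S (Suc s))"
proof (induction b)
  case 0 then show ?case by simp
next
  case (Suc b)
  show ?case
  proof (cases "a = Suc b")
    case True with Suc show ?thesis by simp
  next
    case False
    then have ab: "a \<le> b" using Suc by simp
    show ?thesis
    proof (cases "(v \<in> S a) \<noteq> (v \<in> S b)")
      case True
      with Suc.IH ab show ?thesis by fastforce
    next
      case False
      then show ?thesis using Suc ab by (intro bexI[of _ b]) auto
    qed
  qed
qed

lemma cross_count:
  assumes "a \<le> r" "r \<le> b" "v \<in> S r"
  shows "(if v \<notin> S a then 1 else 0) + (if v \<notin> S b then 1 else 0)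
         \<le> card {s\<in>{a..<b}. v \<in> symdiff (S s) (S (Suc s))}"
proof -
  let ?X = "{s\<in>{a..<b}. v \<in> symdiff (S s) (S (Suc s))}"
  have fin: "finite ?X" by simp
  have A: "v \<notin> S a \<Longrightarrow> \<exists>s\<in>{a..<r}. s \<in> ?X"
    using cross_exists[of a r v S] assms by (auto simp: symdiff_mem)
  have B: "v \<notin> S b \<Longrightarrow> \<exists>s\<in>{r..<b}. s \<in> ?X"
    using cross_exists[of r b v S] assms by (auto simp: symdiff_mem)
  show ?thesis
  proof (cases "v \<notin> S a")
    case True
    then obtain s1 where s1: "s1 \<in> {a..<r}" "s1 \<in> ?X" using A by blast
    show ?thesis
    proof (cases "v \<notin> S b")
      case True
      then obtain s2 where s2: "s2 \<in> {r..<b}" "s2 \<in> ?X" using B by blast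
      have "card {s1, s2} \<le> card ?X" using s1 s2 by (intro card_mono) auto
      moreover have "card {s1,s2} = 2" using s1 s2 by auto
      ultimately show ?thesis using \<open>v \<notin> S a\<close> True by simp
    next
      case False
      have "?X \<noteq> {}" using s1 by blast
      then have "card ?X \<ge> 1" using fin by (simp add: Suc_le_eq card_gt_0_iff)
      then show ?thesis using False True by simp
    qed
  next
    case False
    show ?thesis
    proof (cases "v \<notin> S b")
      case True
      then obtain s2 where s2: "s2 \<in> {r..<b}" "s2 \<in> ?X" using B by blast
      have "?X \<noteq> {}" using s2 by blast
      then have "card ?X \<ge> 1" using fin by (simp add: Suc_le_eq card_gt_0_iff)
      then show ?thesis using False True by simp
    next
      case False
      then show ?thesis using \<open>\<not> v \<notin> S a\<close> by simp
    qed
  qed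
qed

lemma dc:
  assumes "finite I" "finite A"
  shows "(\<Sum>s\<in>I. card (D s \<inter> A)) = (\<Sum>v\<in>A. card {s\<in>I. v \<in> D s})"
proof -
  have 1: "\<And>s. card (D s \<inter> A) = (\<Sum>v\<in>A. if v \<in> D s then 1 else 0)"
  proof -
    fix s
    have "D s \<inter> A = {v\<in>A. v \<in> D s}" by auto
    then show "card (D s \<inter> A) = (\<Sum>v\<in>A. if v \<in> D s then 1 else 0)"
      using assms(2) by (simp add: sum.inter_filter[symmetric])
  qed
  have 2: "\<And>v. card {s\<in>I. v \<in> D s} = (\<Sum>s\<in>I. if v \<in> D s then 1 else 0)"
    using assms(1) by (simp add: sum.inter_filter[symmetric])
  show ?thesis unfolding 1 2 by (rule sum.swap)
qed

lemma card_filter_sum: "finite A \<Longrightarrow> card {v\<in>A. P v} = (\<Sum>v\<in>A. if P v then 1 else 0)"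
  by (simp add: sum.inter_filter[symmetric])

lemma star_forced:
  assumes "finite S" "card S \<le> n" "\<And>y. y \<in> {1..n+1} \<Longrightarrow> c \<in> S \<or> f y \<in> S" "inj f"
  shows "c \<in> S"
proof (rule ccontr)
  assume "c \<notin> S"
  then have "f ` {1..n+1} \<subseteq> S" using assms(3) by auto
  then have "card (f ` {1..n+1}) \<le> card S" using assms(1) by (rule card_mono[rotated])
  moreover have "card (f ` {1..n+1}) = n + 1" using assms(4) by (simp add: card_image inj_on_def inj_def)
  ultimately show False using assms(2) by simp
qed

lemma split_segments:
  "(\<Sum>s\<in>{1..<2*m*n+1}. (f s::nat)) = (\<Sum>j<(n::nat). \<Sum>s\<in>{2*m*j+1..<2*m*j+2*m+1}. f s)"
proof (induction n)
  case 0 then show ?case by simp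
next
  case (Suc n)
  have e: "2*m*Suc n+1 = 2*m*n+2*m+1" by (simp add: algebra_simps)
  have "(\<Sum>s\<in>{1..<2*m*n+2*m+1}. f s) = (\<Sum>s\<in>{1..<2*m*n+1}. f s) + (\<Sum>s\<in>{2*m*n+1..<2*m*n+2*m+1}. f s)"
    by (rule sum.atLeastLessThan_concat[symmetric]) (auto simp: algebra_simps)
  then show ?case unfolding e sum.lessThan_Suc Suc.IH by simp
qed



lemma layer_C_leaf:
  "odd i \<Longrightarrow> 1 \<le> i \<Longrightarrow> i \<le> red_tau es k \<Longrightarrow> y \<in> {1..red_k' k+1} \<Longrightarrow> {C i, LeafC i y} \<in> red_layer es k i"
  unfolding red_layer_def Let_def
  apply (rule CollectI)
  apply (rule disjI1)
  by blast

lemma layer_U_leaf: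
  "j \<le> red_kappa k \<Longrightarrow> x \<in> {1..red_K k} \<Longrightarrow> y \<in> {1..red_k' k+1} \<Longrightarrow>
   {U (j+1) x, LeafU (j+1) x y} \<in> red_layer es k (2*length es*j+1)"
  unfolding red_layer_def Let_def
  apply (rule CollectI)
  apply (rule disjI2)
  apply (rule disjI1)
  apply (rule exI[of _ j])
  by blast

lemma layer_edge:
  assumes "j < red_kappa k" "i' \<in> {1..length es}" "es!(i'-1) = {v,w}"
  shows "{C (2*length es*j+2*i'), EdgeV (es!(i'-1))} \<in> red_layer es k (2*length es*j+2*i')
       \<and> {C (2*length es*j+2*i'), Orig v} \<in> red_layer es k (2*length es*j+2*i')
       \<and> {C (2*length es*j+2*i'), Orig w} \<in> red_layer es k (2*length es*j+2*i')"
  unfolding red_layer_def Let_def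
  apply (intro conjI CollectI)
  apply (rule disjI2, rule disjI2, rule disjI2, rule disjI2, rule exI[of _ j], rule conjI[OF assms(1)], rule bexI[of _ i'], rule conjI[OF refl], rule exI[of _ v], rule exI[of _ w], use assms in blast, rule assms(2))+
  done

lemma vc_edge: "is_vertex_cover E S \<Longrightarrow> {a,b} \<in> E \<Longrightarrow> a \<in> S \<or> b \<in> S"
  unfolding is_vertex_cover_def by (metis Int_insert_left_if0 Int_insert_left_if1 Int_empty_left insert_not_empty)

lemma finite_red_vertices: "finite V \<Longrightarrow> finite (red_vertices V es k)"
proof -
  assume fV: "finite V"
  have 1: "{U t x | t x. t \<in> {1..red_kappa k + 1} \<and> x \<in> {1..red_K k}}
       \<subseteq> (\<lambda>(t,x). U t x) ` ({1..red_kappa k + 1} \<times> {1..red_K k})" by auto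
  have 2: "{LeafC i y | i y. i \<in> {1..red_tau es k} \<and> odd i \<and> y \<in> {1..red_k' k + 1}}
       \<subseteq> (\<lambda>(i,y). LeafC i y) ` ({1..red_tau es k} \<times> {1..red_k' k + 1})" by auto
  have 3: "{LeafU t x y | t x y. t \<in> {1..red_kappa k + 1} \<and> x \<in> {1..red_K k}
                          \<and> y \<in> {1..red_k' k + 1}}
       \<subseteq> (\<lambda>(t,x,y). LeafU t x y) ` ({1..red_kappa k + 1} \<times> {1..red_K k} \<times> {1..red_k' k + 1})"
  proof
    fix z assume "z \<in> {LeafU t x y | t x y. t \<in> {1..red_kappa k + 1} \<and> x \<in> {1..red_K k}
                          \<and> y \<in> {1..red_k' k + 1}}"
    then obtain t x y where "z = LeafU t x y" "t \<in> {1..red_kappa k + 1}" "x \<in> {1..red_K k}" "y \<in> {1..red_k' k + 1}" by blast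
    then show "z \<in> (\<lambda>(t,x,y). LeafU t x y) ` ({1..red_kappa k + 1} \<times> {1..red_K k} \<times> {1..red_k' k + 1})"
      by (intro image_eqI[of _ _ "(t,x,y)"]) auto
  qed
  show ?thesis unfolding red_vertices_def
    using fV finite_subset[OF 1] finite_subset[OF 2] finite_subset[OF 3] by auto
qed



lemma seg_le: "j < (n::nat) \<Longrightarrow> 2*m*j+2*m \<le> 2*m*n"
proof -
  assume "j < n"
  then have "m*(j+1) \<le> m*n" by (intro mult_le_mono2) simp
  then show ?thesis by (simp add: algebra_simps)
qed

lemma seg_disj: "j1 \<noteq> j2 \<Longrightarrow> {2*m*j1+2..2*m*j1+2*m+1} \<inter> {2*m*j2+2..2*m*j2+2*m+(1::nat)} = {}"
proof -
  assume "j1 \<noteq> j2"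
  then have "j1 < j2 \<or> j2 < j1" by arith
  then show ?thesis
  proof
    assume "j1 < j2" then have "2*m*j1+2*m \<le> 2*m*j2" by (rule seg_le)
    then show ?thesis by auto
  next
    assume "j2 < j1" then have "2*m*j2+2*m \<le> 2*m*j1" by (rule seg_le)
    then show ?thesis by auto
  qed
qed

lemma cheap_image:
  "{i\<in>{2*m*j+2..2*m*j+2*m+(1::nat)}. \<not> (odd i \<or> P i)} = (\<lambda>i'. 2*m*j+2*i') ` {i'\<in>{1..m}. \<not> P (2*m*j+2*i')}"
proof
  show "(\<lambda>i'. 2*m*j+2*i') ` {i'\<in>{1..m}. \<not> P (2*m*j+2*i')} \<subseteq> {i\<in>{2*m*j+2..2*m*j+2*m+1}. \<not> (odd i \<or> P i)}"
    by auto
next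
  show "{i\<in>{2*m*j+2..2*m*j+2*m+1}. \<not> (odd i \<or> P i)} \<subseteq> (\<lambda>i'. 2*m*j+2*i') ` {i'\<in>{1..m}. \<not> P (2*m*j+2*i')}"
  proof
    fix i assume i: "i \<in> {i\<in>{2*m*j+2..2*m*j+2*m+1}. \<not> (odd i \<or> P i)}"
    then obtain q where q: "i = 2*q" by (auto elim: evenE)
    define i' where "i' = q - m*j"
    have "i = 2*m*j+2*i'" using i q unfolding i'_def by auto
    moreover have "i' \<in> {1..m}" using i q unfolding i'_def by auto
    ultimately show "i \<in> (\<lambda>i'. 2*m*j+2*i') ` {i'\<in>{1..m}. \<not> P (2*m*j+2*i')}"
      using i by auto
  qed
qed



lemma sumlem1: "(\<Sum>j<n. 2*f j + (2::nat)) = 2*(\<Sum>j<n. f j) + 2*n"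
  by (induction n) auto
lemma sumlem2: "(\<Sum>j<n. 2*K + g j) = 2*K*n + (\<Sum>j<n. (g j::nat))"
  by (induction n) auto

lemma core:
  fixes S :: "nat \<Rightarrow> 'a vtx set" and Xt :: "'a vtx set"
  assumes fin: "\<And>i. i \<in> {1..\<tau>} \<Longrightarrow> finite (S i)"
    and cardS: "\<And>i. i \<in> {1..\<tau>} \<Longrightarrow> card (S i) \<le> k'"
    and step: "\<And>s. 1 \<le> s \<Longrightarrow> s < \<tau> \<Longrightarrow> card (symdiff (S s) (S (Suc s))) \<le> 2"
    and tau: "\<tau> = 2*m*\<kappa>+1"
    and F1: "\<And>i. odd i \<Longrightarrow> i \<in> {1..\<tau>} \<Longrightarrow> C i \<in> S i"
    and F2: "\<And>j x. j \<le> \<kappa> \<Longrightarrow> x \<in> {1..K} \<Longrightarrow> U (j+1) x \<in> S (2*m*j+1)"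
    and kk: "k' = 2*K + k + 1" and kap: "\<kappa> = K + k + 3"
    and finX: "finite Xt" and Xt: "\<And>v. v \<in> Xt \<Longrightarrow> (\<forall>i. v \<noteq> C i) \<and> (\<forall>t x. v \<noteq> U t x)"
  shows "\<exists>j<\<kappa>. 2*K + (\<Sum>s\<in>{2*m*j+1..<2*m*j+2*m+1}. card (symdiff (S s) (S (Suc s)) \<inter> Xt))
                \<le> 2 * card {i'\<in>{1..m}. C (2*m*j+2*i') \<notin> S (2*m*j+2*i')} + 1"
proof (rule ccontr)
  assume neg: "\<not> ?thesis"
  define D where "D s = symdiff (S s) (S (Suc s))" for s
  define X where "X j = (\<Sum>s\<in>{2*m*j+1..<2*m*j+2*m+1}. card (D s \<inter> Xt))" for j
  define Ch where "Ch j = {i'\<in>{1..m}. C (2*m*j+2*i') \<notin> S (2*m*j+2*i')}" for j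
  define N where "N j = card (Ch j)" for j
  have negj: "2 * N j + 2 \<le> 2*K + X j" if "j < \<kappa>" for j
    using neg that unfolding X_def N_def Ch_def D_def by force
  define Iv where "Iv j = {2*m*j+2..2*m*j+2*m+1}" for j
  define Creq where "Creq j = {i\<in>Iv j. odd i \<or> C i \<in> S i}" for j
  define R :: "nat \<Rightarrow> 'a vtx set" where "R j = C ` Creq j \<union> (\<lambda>x. U (j+2) x) ` {1..K}" for j
  define R0 :: "'a vtx set" where "R0 = insert (C 1) ((\<lambda>x. U 1 x) ` {1..K})"
  define Req where "Req = R0 \<union> (\<Union>j<\<kappa>. R j)"

  have cardCreq: "card (Creq j) + N j = 2*m" for j
  proof -
    have e: "{i\<in>Iv j. \<not> (odd i \<or> C i \<in> S i)} = (\<lambda>i'. 2*m*j+2*i') ` Ch j"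
      unfolding Iv_def Ch_def by (rule cheap_image)
    have inj: "inj_on (\<lambda>i'. 2*m*j+2*i') (Ch j)" by (auto simp: inj_on_def)
    have u: "Creq j \<union> {i\<in>Iv j. \<not> (odd i \<or> C i \<in> S i)} = Iv j" unfolding Creq_def by auto
    have "card (Creq j \<union> {i\<in>Iv j. \<not> (odd i \<or> C i \<in> S i)}) = card (Creq j) + card {i\<in>Iv j. \<not> (odd i \<or> C i \<in> S i)}"
      unfolding Creq_def by (rule card_Un_disjoint) (auto simp: Iv_def)
    then have "card (Iv j) = card (Creq j) + card {i\<in>Iv j. \<not> (odd i \<or> C i \<in> S i)}" unfolding u .
    moreover have "card (Iv j) = 2*m" unfolding Iv_def by simp
    ultimately show ?thesis unfolding e N_def using card_image[OF inj] by simp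
  qed
  have finCreq: "finite (Creq j)" for j unfolding Creq_def Iv_def by simp
  have cardR: "card (R j) = card (Creq j) + K" for j
  proof -
    have "card (R j) = card (C ` Creq j :: 'a vtx set) + card ((\<lambda>x. U (j+2) x) ` {1..K} :: 'a vtx set)"
      unfolding R_def by (rule card_Un_disjoint) (auto simp: finCreq)
    moreover have "card (C ` Creq j :: 'a vtx set) = card (Creq j)" by (rule card_image) (simp add: inj_on_def)
    moreover have "card ((\<lambda>x. U (j+2) x) ` {1..K} :: 'a vtx set) = K" by (subst card_image) (auto simp: inj_on_def)
    ultimately show ?thesis by simp
  qed
  have cardR0: "card R0 = K + 1"
  proof -
    have "card ((\<lambda>x. U 1 x) ` {1..K} :: 'a vtx set) = K" by (subst card_image) (auto simp: inj_on_def)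
    moreover have "(C 1 :: 'a vtx) \<notin> (\<lambda>x. U 1 x) ` {1..K}" by auto
    ultimately show ?thesis unfolding R0_def by simp
  qed
  have finR: "finite (R j)" for j unfolding R_def using finCreq by simp
  have disjR: "R j1 \<inter> R j2 = {}" if "j1 \<noteq> j2" for j1 j2
  proof -
    have "Iv j1 \<inter> Iv j2 = {}" unfolding Iv_def using seg_disj[OF that] by simp
    then have "Creq j1 \<inter> Creq j2 = {}" unfolding Creq_def by auto
    then show ?thesis unfolding R_def using that by auto
  qed
  have disjR0: "R0 \<inter> (\<Union>j<\<kappa>. R j) = {}"
  proof -
    have "1 \<notin> Creq j" for j unfolding Creq_def Iv_def by simp
    then show ?thesis unfolding R0_def R_def by auto
  qed
  have cardReq: "card Req = K + 1 + (\<Sum>j<\<kappa>. card (R j))"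
  proof -
    have "card (\<Union>j<\<kappa>. R j) = (\<Sum>j<\<kappa>. card (R j))"
      by (rule card_UN_disjoint) (auto simp: finR disjR)
    moreover have "card Req = card R0 + card (\<Union>j<\<kappa>. R j)"
      unfolding Req_def by (rule card_Un_disjoint[OF _ _ disjR0]) (auto simp: R0_def finR)
    ultimately show ?thesis using cardR0 by simp
  qed
  have finReq: "finite Req" unfolding Req_def R0_def using finR by simp
  have ReqXt: "Req \<inter> Xt = {}" unfolding Req_def R0_def R_def using Xt by blast

  have tau_ge: "2*m*j+2*m+1 \<le> \<tau>" if "j < \<kappa>" for j using seg_le[OF that, of m] tau by simp
  have wit: "\<exists>r. 1 \<le> r \<and> r \<le> \<tau> \<and> v \<in> S r" if "v \<in> Req" for v
  proof -
    have "v \<in> R0 \<or> (\<exists>j<\<kappa>. v \<in> R j)" using that unfolding Req_def by blast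
    then show ?thesis
    proof
      assume "v \<in> R0"
      then have "v = C 1 \<or> (\<exists>x\<in>{1..K}. v = U 1 x)" unfolding R0_def by blast
      then show ?thesis
      proof
        assume "v = C 1" then show ?thesis using F1[of 1] tau by auto
      next
        assume "\<exists>x\<in>{1..K}. v = U 1 x"
        then obtain x where "x \<in> {1..K}" "v = U 1 x" by blast
        then show ?thesis using F2[of 0 x] tau by (intro exI[of _ 1]) auto
      qed
    next
      assume "\<exists>j<\<kappa>. v \<in> R j"
      then obtain j where j: "j < \<kappa>" "v \<in> R j" by blast
      then have "(\<exists>i\<in>Creq j. v = C i) \<or> (\<exists>x\<in>{1..K}. v = U (j+2) x)" unfolding R_def by blast
      then show ?thesis
      proof
        assume "\<exists>i\<in>Creq j. v = C i"
        then obtain i where i: "i \<in> Creq j" "v = C i" by blast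
        have ir: "1 \<le> i \<and> i \<le> \<tau>" using i(1) tau_ge[OF j(1)] unfolding Creq_def Iv_def by auto
        have "odd i \<or> C i \<in> S i" using i(1) unfolding Creq_def by blast
        then have "C i \<in> S i" using F1[of i] ir by auto
        then show ?thesis using ir i by blast
      next
        assume "\<exists>x\<in>{1..K}. v = U (j+2) x"
        then obtain x where x: "x \<in> {1..K}" "v = U (j+2) x" by blast
        have "U (j+1+1) x \<in> S (2*m*(j+1)+1)" using F2[of "j+1" x] x j by simp
        moreover have "2*m*(j+1)+1 \<le> \<tau>" using tau_ge[OF j(1)] by (simp add: algebra_simps)
        ultimately show ?thesis using x by (intro exI[of _ "2*m*(j+1)+1"]) simp
      qed
    qed
  qed

  define n where "n v = card {s\<in>{1..<\<tau>}. v \<in> D s}" for v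
  have finD: "finite (D s)" if "1 \<le> s" "s < \<tau>" for s
    using fin[of s] fin[of "Suc s"] that unfolding D_def symdiff_def by auto
  have per_v: "(if v \<notin> S 1 then 1 else 0) + (if v \<notin> S \<tau> then 1 else 0) \<le> n v" if vR: "v \<in> Req" for v
  proof -
    obtain r where "1 \<le> r" "r \<le> \<tau>" "v \<in> S r" using wit[OF vR] by blast
    then show ?thesis unfolding n_def D_def by (rule cross_count)
  qed
  have sum_h: "card (Req - S 1) + card (Req - S \<tau>) \<le> (\<Sum>v\<in>Req. n v)"
  proof -
    have a: "card (Req - S 1) = (\<Sum>v\<in>Req. if v \<notin> S 1 then 1 else 0)"
      using card_filter_sum[OF finReq, of "\<lambda>v. v \<notin> S 1"] by (simp add: set_diff_eq)
    have b: "card (Req - S \<tau>) = (\<Sum>v\<in>Req. if v \<notin> S \<tau> then 1 else 0)"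
      using card_filter_sum[OF finReq, of "\<lambda>v. v \<notin> S \<tau>"] by (simp add: set_diff_eq)
    show ?thesis unfolding a b sum.distrib[symmetric] by (rule sum_mono) (rule per_v)
  qed
  have g1: "card Req \<le> card (Req - S 1) + k'"
  proof -
    have "card Req \<le> card ((Req - S 1) \<union> S 1)" by (rule card_mono) (use fin[of 1] finReq tau in auto)
    also have "\<dots> \<le> card (Req - S 1) + card (S 1)" by (rule card_Un_le)
    also have "card (S 1) \<le> k'" using cardS[of 1] tau by simp
    finally show ?thesis by simp
  qed
  have g2: "card Req \<le> card (Req - S \<tau>) + k'"
  proof -
    have "card Req \<le> card ((Req - S \<tau>) \<union> S \<tau>)" by (rule card_mono) (use fin[of \<tau>] finReq tau in auto)
    also have "\<dots> \<le> card (Req - S \<tau>) + card (S \<tau>)" by (rule card_Un_le)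
    also have "card (S \<tau>) \<le> k'" using cardS[of \<tau>] tau by simp
    finally show ?thesis by simp
  qed
  have sumD: "(\<Sum>s\<in>{1..<\<tau>}. card (D s)) \<le> 2*(2*m*\<kappa>)"
  proof -
    have "(\<Sum>s\<in>{1..<\<tau>}. card (D s)) \<le> (\<Sum>s\<in>{1..<\<tau>}. 2)" by (rule sum_mono) (use step in \<open>auto simp: D_def\<close>)
    then show ?thesis using tau by simp
  qed
  have sumsplit: "(\<Sum>s\<in>{1..<\<tau>}. card (D s \<inter> Req)) + (\<Sum>s\<in>{1..<\<tau>}. card (D s \<inter> Xt)) \<le> (\<Sum>s\<in>{1..<\<tau>}. card (D s))"
    unfolding sum.distrib[symmetric]
  proof (rule sum_mono)
    fix s assume "s \<in> {1..<\<tau>}"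
    then have fD: "finite (D s)" using finD by auto
    have "card (D s \<inter> Req) + card (D s \<inter> Xt) = card (D s \<inter> Req \<union> D s \<inter> Xt)"
      by (rule card_Un_disjoint[symmetric]) (use fD ReqXt in auto)
    also have "\<dots> \<le> card (D s)" by (rule card_mono[OF fD]) auto
    finally show "card (D s \<inter> Req) + card (D s \<inter> Xt) \<le> card (D s)" .
  qed
  have dcReq: "(\<Sum>s\<in>{1..<\<tau>}. card (D s \<inter> Req)) = (\<Sum>v\<in>Req. n v)"
    unfolding n_def by (rule dc) (simp_all add: finReq)
  have splitX: "(\<Sum>s\<in>{1..<\<tau>}. card (D s \<inter> Xt)) = (\<Sum>j<\<kappa>. X j)"
    unfolding tau X_def by (rule split_segments)
  have s1: "(\<Sum>j<\<kappa>. card (R j)) = (\<Sum>j<\<kappa>. card (Creq j)) + \<kappa>*K"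
    by (simp add: cardR sum.distrib)
  have s2: "(\<Sum>j<\<kappa>. card (Creq j)) + (\<Sum>j<\<kappa>. N j) = 2*m*\<kappa>"
    unfolding sum.distrib[symmetric] cardCreq by simp
  have "(\<Sum>j<\<kappa>. 2*N j + 2) \<le> (\<Sum>j<\<kappa>. 2*K + X j)" by (rule sum_mono) (use negj in simp)
  then have s3: "2*(\<Sum>j<\<kappa>. N j) + 2*\<kappa> \<le> 2*K*\<kappa> + (\<Sum>j<\<kappa>. X j)"
    by (simp only: sumlem1 sumlem2)
  have e: "2*K*\<kappa> = 2*(\<kappa>*K)" by simp
  show False using e s1 s2 s3 dcReq splitX sumsplit sumD g1 g2 sum_h cardReq kk kap
    by linarith
qed


lemma choose_le_mono: "q \<le> n \<Longrightarrow> q choose r \<le> n choose r"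
proof (induction n)
  case 0 then show ?case by simp
next
  case (Suc n)
  show ?case
  proof (cases "q = Suc n")
    case True then show ?thesis by simp
  next
    case False
    then have "q \<le> n" using Suc by simp
    then have "q choose r \<le> n choose r" using Suc by simp
    also have "n choose r \<le> Suc n choose r" by (cases r) auto
    finally show ?thesis .
  qed
qed

lemma choose2_strict: "q < k \<Longrightarrow> 2 \<le> k \<Longrightarrow> q choose 2 < k choose 2"
proof -
  assume "q < k" "2 \<le> k"
  then obtain k1 where k1: "k = Suc k1" "q \<le> k1" "1 \<le> k1" by (cases k) auto
  have "q choose 2 \<le> k1 choose 2" by (rule choose_le_mono) (use k1 in simp)
  also have "\<dots> < (k1 choose 1) + (k1 choose 2)" using k1 by simp
  also have "\<dots> = k choose 2" using k1 by (simp add: numeral_2_eq_2)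
  finally show ?thesis .
qed

lemma boundary:
  fixes S :: "'a vtx set"
  assumes "finite S" "card S \<le> k'" "C i \<in> S" "\<forall>x\<in>{1..K}. U t x \<in> S"
    and Xt: "\<And>v. v \<in> Xt \<Longrightarrow> (\<forall>i. v \<noteq> C i) \<and> (\<forall>t x. v \<noteq> U t x)"
  shows "card (S \<inter> Xt) + K + 1 \<le> k'"
proof -
  have fU: "card (U t ` {1..K} :: 'a vtx set) = K" by (subst card_image) (auto simp: inj_on_def)
  have d: "(S \<inter> Xt) \<inter> U t ` {1..K} = {}" using Xt by blast
  have "card ((S \<inter> Xt) \<union> U t ` {1..K}) = card (S \<inter> Xt) + K"
    using card_Un_disjoint[OF _ _ d] assms(1) fU by simp
  moreover have "C i \<notin> (S \<inter> Xt) \<union> U t ` {1..K}" using Xt by blast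
  ultimately have "card (insert (C i) ((S \<inter> Xt) \<union> U t ` {1..K})) = card (S \<inter> Xt) + K + 1"
    using assms(1) by simp
  moreover have "card (insert (C i) ((S \<inter> Xt) \<union> U t ` {1..K})) \<le> card S"
    by (rule card_mono) (use assms in auto)
  ultimately show ?thesis using assms(2) by simp
qed


theorem lemma29:
  fixes V :: "'a set" and es :: "'a set list" and k :: nat
  assumes "finite V" and "V \<noteq> {}"
    and "distinct es"
    and "\<forall>e\<in>set es. \<exists>v w. v \<in> V \<and> w \<in> V \<and> v \<noteq> w \<and> e = {v, w}"
    and "k > 0"
    and "multistage_vc_yes (red_vertices V es k) (red_layer es k) (red_tau es k) (red_k' k) red_l"
  shows "has_clique V (set es) k"
proof (cases "k = 1")
  case True
  from assms(2) obtain v where "v \<in> V" by blast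
  then show ?thesis unfolding has_clique_def True by (intro exI[of _ "{v}"]) auto
next
  case False
  with assms(5) have k2: "2 \<le> k" by simp
  define m where "m = length es"
  define K where "K = red_K k"
  define k' where "k' = red_k' k"
  define \<kappa> where "\<kappa> = red_kappa k"
  define \<tau> where "\<tau> = red_tau es k"
  define Vs where "Vs = red_vertices V es k"
  define Xt :: "'a vtx set" where "Xt = Orig ` V \<union> EdgeV ` set es"
  have tau: "\<tau> = 2*m*\<kappa>+1" unfolding \<tau>_def m_def \<kappa>_def red_tau_def by simp
  have kk: "k' = 2*K+k+1" unfolding k'_def K_def red_k'_def ..
  have kap: "\<kappa> = K+k+3" by (simp add: \<kappa>_def K_def red_kappa_def)
  have KK: "K = k choose 2" by (simp add: K_def red_K_def)
  obtain S where S: "\<forall>i\<in>{1..\<tau>}. S i \<subseteq> Vs \<and> is_vertex_cover (red_layer es k i) (S i) \<and> card (S i) \<le> k'"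
     and Sd: "\<forall>i. 1 \<le> i \<and> i < \<tau> \<longrightarrow> card (symdiff (S i) (S (Suc i))) \<le> 2"
    using assms(6) unfolding multistage_vc_yes_def red_l_def \<tau>_def[symmetric] Vs_def[symmetric] k'_def[symmetric] by (elim exE conjE) (rule that)
  have finVs: "finite Vs" using finite_red_vertices[OF assms(1)] Vs_def by simp
  have fin: "\<And>i. i \<in> {1..\<tau>} \<Longrightarrow> finite (S i)" using S finVs by (meson finite_subset)
  have cardS: "\<And>i. i \<in> {1..\<tau>} \<Longrightarrow> card (S i) \<le> k'" using S by blast
  have vc: "\<And>i. i \<in> {1..\<tau>} \<Longrightarrow> is_vertex_cover (red_layer es k i) (S i)" using S by blast
  have step: "\<And>s. 1 \<le> s \<Longrightarrow> s < \<tau> \<Longrightarrow> card (symdiff (S s) (S (Suc s))) \<le> 2" using Sd by blast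
  have F1: "C i \<in> S i" if "odd i" "i \<in> {1..\<tau>}" for i
  proof (rule star_forced[of "S i" k' _ "LeafC i"])
    show "finite (S i)" using fin that by blast
    show "card (S i) \<le> k'" using cardS that by blast
    show "inj (LeafC i)" by (simp add: inj_def)
    fix y assume "y \<in> {1..k'+1}"
    then have "{C i, LeafC i y} \<in> red_layer es k i"
      using that(2) by (intro layer_C_leaf[OF that(1)]) (simp_all add: \<tau>_def k'_def)
    then show "C i \<in> S i \<or> LeafC i y \<in> S i" by (rule vc_edge[OF vc[OF that(2)]])
  qed
  have F2: "U (j+1) x \<in> S (2*m*j+1)" if "j \<le> \<kappa>" "x \<in> {1..K}" for j x
  proof -
    have r: "2*m*j+1 \<in> {1..\<tau>}" using that tau mult_le_mono2[OF that(1), of "2*m"] by auto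
    show ?thesis
    proof (rule star_forced[of "S (2*m*j+1)" k' _ "LeafU (j+1) x"])
      show "finite (S (2*m*j+1))" using fin r by blast
      show "card (S (2*m*j+1)) \<le> k'" using cardS r by blast
      show "inj (LeafU (j+1) x)" by (simp add: inj_def)
      fix y assume "y \<in> {1..k'+1}"
      then have "{U (j+1) x, LeafU (j+1) x y} \<in> red_layer es k (2*m*j+1)"
        using that unfolding m_def by (intro layer_U_leaf) (simp_all add: \<kappa>_def k'_def K_def)
      then show "U (j+1) x \<in> S (2*m*j+1) \<or> LeafU (j+1) x y \<in> S (2*m*j+1)" by (rule vc_edge[OF vc[OF r]])
    qed
  qed
  have finXt: "finite Xt" unfolding Xt_def using assms(1) by simp
  have Xt: "\<And>v. v \<in> Xt \<Longrightarrow> (\<forall>i. v \<noteq> C i) \<and> (\<forall>t x. v \<noteq> U t x)" unfolding Xt_def by auto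
  obtain j where j: "j < \<kappa>" and ineq: "2*K + (\<Sum>s\<in>{2*m*j+1..<2*m*j+2*m+1}. card (symdiff (S s) (S (Suc s)) \<inter> Xt))
                \<le> 2 * card {i'\<in>{1..m}. C (2*m*j+2*i') \<notin> S (2*m*j+2*i')} + 1"
    using core[of \<tau> S k' m \<kappa> K k Xt, OF fin cardS step tau F1 F2 kk kap finXt Xt] by blast
  define a where "a = 2*m*j+1"
  define b where "b = 2*m*j+2*m+1"
  define D where "D s = symdiff (S s) (S (Suc s))" for s
  define x where "x = (\<Sum>s\<in>{a..<b}. card (D s \<inter> Xt))"
  define Ch where "Ch = {i'\<in>{1..m}. C (2*m*j+2*i') \<notin> S (2*m*j+2*i')}"
  have ineq': "2*K + x \<le> 2*card Ch + 1" using ineq unfolding x_def Ch_def D_def a_def b_def .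
  have bt: "b \<le> \<tau>" using seg_le[OF j, of m] tau unfolding b_def by simp
  have ab: "a \<le> b" unfolding a_def b_def by simp
  have a1: "1 \<le> a" unfolding a_def by simp
  define W where "W = {v\<in>Xt. \<exists>i\<in>{a..b}. v \<in> S i}"
  have WXt: "W \<subseteq> Xt" unfolding W_def by auto
  have finW: "finite W" using finite_subset[OF WXt finXt] .
  have xW: "card (W - S a) + card (W - S b) \<le> x"
  proof -
    have 1: "x = (\<Sum>v\<in>Xt. card {s\<in>{a..<b}. v \<in> D s})" unfolding x_def by (rule dc) (simp_all add: finXt)
    have 2: "(\<Sum>v\<in>W. card {s\<in>{a..<b}. v \<in> D s}) \<le> (\<Sum>v\<in>Xt. card {s\<in>{a..<b}. v \<in> D s})"
      by (rule sum_mono2[OF finXt WXt]) simp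
    have 3: "(\<Sum>v\<in>W. (if v \<notin> S a then 1 else 0) + (if v \<notin> S b then 1 else 0)) \<le> (\<Sum>v\<in>W. card {s\<in>{a..<b}. v \<in> D s})"
    proof (rule sum_mono)
      fix v assume "v \<in> W"
      then obtain r where r: "r \<in> {a..b}" "v \<in> S r" unfolding W_def by blast
      show "(if v \<notin> S a then 1 else 0) + (if v \<notin> S b then 1 else 0) \<le> card {s\<in>{a..<b}. v \<in> D s}"
        unfolding D_def by (rule cross_count) (use r in auto)
    qed
    have 4: "card (W - S a) = (\<Sum>v\<in>W. if v \<notin> S a then 1 else 0)"
      using card_filter_sum[OF finW, of "\<lambda>v. v \<notin> S a"] by (simp add: set_diff_eq)
    have 5: "card (W - S b) = (\<Sum>v\<in>W. if v \<notin> S b then 1 else 0)"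
      using card_filter_sum[OF finW, of "\<lambda>v. v \<notin> S b"] by (simp add: set_diff_eq)
    have 6: "(\<Sum>v\<in>W. (if v \<notin> S a then 1 else 0) + (if v \<notin> S b then (1::nat) else 0))
       = (\<Sum>v\<in>W. if v \<notin> S a then 1 else 0) + (\<Sum>v\<in>W. if v \<notin> S b then 1 else 0)" by (rule sum.distrib)
    show ?thesis using 1 2 3 4 5 6 by linarith
  qed
  have a_in: "a \<in> {1..\<tau>}" using a1 ab bt by simp
  have b_in: "b \<in> {1..\<tau>}" using a1 ab bt by simp
  have Ua: "\<forall>x\<in>{1..K}. U (j+1) x \<in> S a" using F2[of j] j unfolding a_def by simp
  have bb: "b = 2*m*(j+1)+1" unfolding b_def by (simp add: algebra_simps)
  have Ub: "\<forall>x\<in>{1..K}. U (j+1+1) x \<in> S b" using F2[of "j+1"] j unfolding bb by simp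
  have hA: "card (S a \<inter> Xt) + K + 1 \<le> k'"
    by (rule boundary[OF fin[OF a_in] cardS[OF a_in] F1[OF _ a_in] Ua Xt]) (simp add: a_def)
  have hB: "card (S b \<inter> Xt) + K + 1 \<le> k'"
    by (rule boundary[OF fin[OF b_in] cardS[OF b_in] F1[OF _ b_in] Ub Xt]) (simp add: b_def)
  have wa: "card W \<le> card (W - S a) + card (S a \<inter> Xt)"
  proof -
    have "card W \<le> card ((W - S a) \<union> (S a \<inter> Xt))"
      by (rule card_mono) (use finW fin[OF a_in] WXt in auto)
    also have "\<dots> \<le> card (W - S a) + card (S a \<inter> Xt)" by (rule card_Un_le)
    finally show ?thesis .
  qed
  have wb: "card W \<le> card (W - S b) + card (S b \<inter> Xt)"
  proof -
    have "card W \<le> card ((W - S b) \<union> (S b \<inter> Xt))"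
      by (rule card_mono) (use finW fin[OF b_in] WXt in auto)
    also have "\<dots> \<le> card (W - S b) + card (S b \<inter> Xt)" by (rule card_Un_le)
    finally show ?thesis .
  qed
  have W2: "2 * card W \<le> x + 2*K + 2*k" using xW wa wb hA hB kk by linarith
  have cheap: "EdgeV (es!(i'-1)) \<in> W \<and> es!(i'-1) \<in> set es \<and> (\<exists>v w. v\<in>V \<and> w\<in>V \<and> v\<noteq>w \<and> es!(i'-1) = {v,w} \<and> Orig v \<in> W \<and> Orig w \<in> W)"
    if "i' \<in> Ch" for i'
  proof -
    have i': "i' \<in> {1..m}" "C (2*m*j+2*i') \<notin> S (2*m*j+2*i')" using that unfolding Ch_def by auto
    have ein: "es!(i'-1) \<in> set es" using i' unfolding m_def by auto
    then obtain v w where vw: "v \<in> V" "w \<in> V" "v \<noteq> w" "es!(i'-1) = {v,w}" using assms(4) by blast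
    have jk: "j < red_kappa k" using j \<kappa>_def by simp
    have i'm: "i' \<in> {1..length es}" using i' m_def by simp
    have L: "{C (2*m*j+2*i'), EdgeV (es!(i'-1))} \<in> red_layer es k (2*m*j+2*i')
       \<and> {C (2*m*j+2*i'), Orig v} \<in> red_layer es k (2*m*j+2*i')
       \<and> {C (2*m*j+2*i'), Orig w} \<in> red_layer es k (2*m*j+2*i')"
      using layer_edge[OF jk i'm vw(4)] unfolding m_def .
    have iab: "2*m*j+2*i' \<in> {a..b}" using i' unfolding a_def b_def by auto
    then have iin: "2*m*j+2*i' \<in> {1..\<tau>}" using a1 bt by auto
    have vci: "is_vertex_cover (red_layer es k (2*m*j+2*i')) (S (2*m*j+2*i'))" by (rule vc[OF iin])
    have m1: "EdgeV (es!(i'-1)) \<in> S (2*m*j+2*i')" using vc_edge[OF vci] L i'(2) by blast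
    have m2: "Orig v \<in> S (2*m*j+2*i')" using vc_edge[OF vci] L i'(2) by blast
    have m3: "Orig w \<in> S (2*m*j+2*i')" using vc_edge[OF vci] L i'(2) by blast
    have "EdgeV (es!(i'-1)) \<in> W" unfolding W_def Xt_def using m1 iab ein by blast
    moreover have "Orig v \<in> W" unfolding W_def Xt_def using m2 iab vw by blast
    moreover have "Orig w \<in> W" unfolding W_def Xt_def using m3 iab vw by blast
    ultimately show ?thesis using ein vw by blast
  qed
  define E where "E = (\<lambda>i'. es!(i'-1)) ` Ch"
  have injE: "inj_on (\<lambda>i'. es!(i'-1)) Ch"
  proof (rule inj_onI)
    fix i1 i2 assume h: "i1 \<in> Ch" "i2 \<in> Ch" "es!(i1-1) = es!(i2-1)"
    then have "i1 \<in> {1..m}" "i2 \<in> {1..m}" unfolding Ch_def by auto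
    then have "i1 - 1 = i2 - 1" using h(3) nth_eq_iff_index_eq[OF assms(3), of "i1-1" "i2-1"] unfolding m_def by auto
    then show "i1 = i2" using \<open>i1 \<in> {1..m}\<close> \<open>i2 \<in> {1..m}\<close> by auto
  qed
  have cardE: "card E = card Ch" unfolding E_def by (rule card_image[OF injE])
  define Q where "Q = {v\<in>V. Orig v \<in> W}"
  have finQ: "finite Q" unfolding Q_def using assms(1) by simp
  have EW: "EdgeV ` E \<subseteq> W" unfolding E_def using cheap by blast
  have QW: "Orig ` Q \<subseteq> W" unfolding Q_def by blast
  have finE: "finite E" unfolding E_def Ch_def by simp
  have EQ: "card E + card Q \<le> card W"
  proof -
    have "card (EdgeV ` E \<union> Orig ` Q) = card (EdgeV ` E) + card (Orig ` Q)"
      by (rule card_Un_disjoint) (use finE finQ in auto)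
    also have "card (EdgeV ` E) = card E" by (rule card_image) (simp add: inj_on_def)
    also have "card (Orig ` Q) = card Q" by (rule card_image) (simp add: inj_on_def)
    finally have "card (EdgeV ` E \<union> Orig ` Q) = card E + card Q" .
    moreover have "card (EdgeV ` E \<union> Orig ` Q) \<le> card W" by (rule card_mono[OF finW]) (use EW QW in blast)
    ultimately show ?thesis by simp
  qed
  have Qk: "card Q \<le> k" using EQ W2 ineq' cardE by linarith
  have KE: "K \<le> card E" using ineq' cardE by linarith
  have Esub: "E \<subseteq> {A. A \<subseteq> Q \<and> card A = 2}"
  proof
    fix e assume "e \<in> E"
    then obtain i' where "i' \<in> Ch" "e = es!(i'-1)" unfolding E_def by blast
    then obtain v w where "v\<in>V" "w\<in>V" "v\<noteq>w" "e = {v,w}" "Orig v \<in> W" "Orig w \<in> W" using cheap by blast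
    then show "e \<in> {A. A \<subseteq> Q \<and> card A = 2}" unfolding Q_def by auto
  qed
  have finP: "finite {A. A \<subseteq> Q \<and> card A = 2}" using finQ by simp
  have nsub: "card {A. A \<subseteq> Q \<and> card A = 2} = card Q choose 2" by (rule n_subsets[OF finQ])
  have EleQ: "card E \<le> card Q choose 2" using card_mono[OF finP Esub] nsub by simp
  have cQ: "card Q = k"
  proof (rule ccontr)
    assume "card Q \<noteq> k"
    then have "card Q < k" using Qk by simp
    then have "card Q choose 2 < k choose 2" using choose2_strict k2 by blast
    then show False using EleQ KE KK by simp
  qed
  have Eeq: "E = {A. A \<subseteq> Q \<and> card A = 2}"
    by (rule card_subset_eq[OF finP Esub]) (use nsub cQ KK KE EleQ in simp)
  have Eset: "E \<subseteq> set es" unfolding E_def using cheap by blast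
  show ?thesis unfolding has_clique_def
  proof (intro exI[of _ Q] conjI ballI impI)
    show "Q \<subseteq> V" unfolding Q_def by blast
    show "card Q = k" by (rule cQ)
    fix u w assume "u \<in> Q" "w \<in> Q" "u \<noteq> w"
    then have "{u,w} \<in> E" unfolding Eeq by auto
    then show "{u,w} \<in> set es" using Eset by blast
  qed
qed


end
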